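(* Let $A$ be a nontrivial closed class of decision tables from $\mathcal M_2^\infty$ and $\psi$ a bounded complexity measure. If the function $Z_{\psi,A}$ is not everywhere defined, then the function $\mathcal H^\infty_{\psi,A}$ is not everywhere defined.
   Context: Notation: $\omega=\{0,1,2,\dots\}$; $\mathcal P(\omega)$ is the set of nonempty finite subsets of $\omega$; $E_2=\{0,1\}$. $P=\{f_i:i\in\omega\}$ is a set of attributes, $f_i\neq f_j$ for $i\ne j$. Decision tables: $\mathcal M_2^\infty$ is the set of rectangular tables filled with numbers from $E_2$, whose columns are labeled with pairwise different attributes from $P$, whose rows are pairwise different, and each row of which is labeled with a set from $\mathcal P(\omega)$ (its set of decisions). The empty table (no rows) is denoted $\Lambda$ and belongs to $\mathcal M_2^\infty$. For $T\in\mathcal M_2^\infty$: $\Pi(T)$ is the intersection of the decision sets of all rows (common decisions); $\mathrm{At}(T)$ is the set of attributes labeling columns; $N(T)$ is the number of rows. For nonempty $T$ and a word $\alpha=(f_{i_1},\delta_1)\cdots(f_{i_m},\delta_m)$ with $f_{i_j}\in\mathrm{At}(T)$, $\delta_j\in E_2$, $T\alpha$ is the subtable of $T$ consisting of the rows having value $\delta_j$ in the column $f_{i_j}$ for all $j$; $T\lambda=T$ for the empty word $\lambda$. Operations: for $D\subseteq\mathrm{At}(T)$, $I(D,T)$ is obtained from $T$ by deleting the columns labeled with attributes from $D$ and, in each group of rows coinciding on the remaining columns, keeping only the first row; $I(\mathrm{At}(T),T)=\Lambda$. For $\nu:E_2^{|\mathrm{At}(T)|}\to\mathcal P(\omega)$,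 $J(\nu,T)$ is obtained by replacing the decision set of each row $\bar\delta$ by $\nu(\bar\delta)$. $[T]=\{J(\nu,I(D,T)):D\subseteq\mathrm{At}(T),\ \nu:E_2^{|\mathrm{At}(T)\setminus D|}\to\mathcal P(\omega)\}$; for nonempty $A\subseteq\mathcal M_2^\infty$, $[A]=\bigcup_{T\in A}[T]$. $A$ is a closed class if $[A]=A$; nontrivial if it contains a nonempty table. Decision trees: a $2$-decision tree is a finite directed rooted tree with at least two nodes in which the root and the edges leaving the root are unlabeled, each terminal node is labeled with a decision from $\omega$, and each other node is labeled with an attribute from $P$, each edge leaving such a node being labeled with a number from $E_2$. $\mathrm{At}(\Gamma)$ is the set of attributes labeling nodes of $\Gamma$. For a complete path $\tau=v_1,d_1,\dots,v_m,d_m,v_{m+1}$ (from the root to a terminal node), $\pi(\tau)=\lambda$ if $m=1$, and otherwise $\pi(\tau)=(f_{i_2},\delta_2)\cdots(f_{i_m},\delta_m)$ where $v_j$ is labeled $f_{i_j}$ and $d_j$ is labeled $\delta_j$; $T(\tau)=T\pi(\tau)$. For $T\ne\Lambda$, a nondeterministic decision tree for $T$ is a $2$-decision tree $\Gamma$ with $\mathrm{At}(\Gamma)\subseteq\mathrm{At}(T)$ such that every row of $T$ belongs to $T(\tau)$ for some complete path $\tau$, and for every complete path $\tau$ either $T(\tau)=\Lambda$ or the decision at the terminal node of $\tau$ belongs to $\Pi(T(\tau))$. A deterministic decision tree for $T$ is a nondeterministic decision tree for $T$ in which, additionally, exactly one edge leaves the root and the edges leaving any node that is neither the root nor terminal are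 labeled with pairwise different numbers. Complexity measures: a partially bounded complexity measure is a function $\psi:P^*\to\omega$ on finite words over $P$ such that for all words $\alpha_1,\alpha_2$: $\psi(\alpha_1)=0$ iff $\alpha_1=\lambda$; $\psi(\alpha_1)$ is invariant under permutation of letters; $\psi(\alpha_1)\le\psi(\alpha_1\alpha_2)$; $\psi(\alpha_1\alpha_2)\le\psi(\alpha_1)+\psi(\alpha_2)$. It is bounded if in addition $\psi(\alpha)\ge|\alpha|$ for all $\alpha$. $\psi$ is extended to words $(f_{i_1},\delta_1)\cdots(f_{i_m},\delta_m)$ by $\psi(f_{i_1}\cdots f_{i_m})$ ($\psi(\lambda)=0$). For a $2$-decision tree $\Gamma$, $\psi(\Gamma)=\max_\tau\psi(\pi(\tau))$ over complete paths. For $T\ne\Lambda$, $\psi^d(T)$ (resp. $\psi^a(T)$) is the minimum of $\psi(\Gamma)$ over deterministic (resp. nondeterministic) decision trees $\Gamma$ for $T$; $\psi^d(\Lambda)=\psi^a(\Lambda)=0$. Parameters: $m_\psi(T)=\max\{\psi(f_i):f_i\in\mathrm{At}(T)\}$, $m_\psi(\Lambda)=0$. A table $Q\in\mathcal M_2^\infty$ is complete if $N(Q)=2^{|\mathrm{At}(Q)|}$; $Z(T)$ is the maximum number of columns of a complete table in $[T]$ if such tables exist, and $0$ otherwise; $Z(\Lambda)=0$. For $n\in\omega$: $A_\psi(n)=\{T\in A:m_\psi(T)\le n\}$; $Z_{\psi,A}(n)$ is undefined if $\{Z(T):T\in A_\psi(n)\}$ is infinite, else its maximum; $\mathcal H^\infty_{\psi,A}(n)$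 is undefined if $\{\psi^d(T):T\in A,\psi^a(T)\le n\}$ is infinite, else its maximum. *)

theory Defs
  imports Main "HOL-Library.Multiset"
begin

text \<open>Attributes f_i are represented by their index i :: nat; decisions are nat;
  E_2 = {0,1} is represented by bool (False = 0, True = 1).\<close>

record dtable =
  cols :: "nat list"
  rows :: "(bool list \<times> nat set) list"

definition Lambda :: dtable where
  "Lambda = \<lparr>cols = [], rows = []\<rparr>"

definition wf_table :: "dtable \<Rightarrow> bool" where
  "wf_table T \<longleftrightarrow>
     distinct (cols T) \<and>
     (rows T = [] \<longleftrightarrow> cols T = []) \<and>
     distinct (map fst (rows T)) \<and>
     (\<forall>p \<in> set (rows T). length (fst p) = length (cols T) \<and> finite (snd p) \<and> snd p \<noteq> {})"

definition M2 :: "dtable set" where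
  "M2 = {T. wf_table T}"

definition At :: "dtable \<Rightarrow> nat set" where
  "At T = set (cols T)"

definition Nrows :: "dtable \<Rightarrow> nat" where
  "Nrows T = length (rows T)"

definition Pi_dec :: "dtable \<Rightarrow> nat set" where
  "Pi_dec T = (\<Inter>p \<in> set (rows T). snd p)"

definition row_val :: "nat list \<Rightarrow> bool list \<Rightarrow> nat \<Rightarrow> bool option" where
  "row_val cs r f = map_of (zip cs r) f"

definition subtab :: "dtable \<Rightarrow> (nat \<times> bool) list \<Rightarrow> dtable" where
  "subtab T \<alpha> =
    (let rs = filter (\<lambda>p. \<forall>q \<in> set \<alpha>. row_val (cols T) (fst p) (fst q) = Some (snd q)) (rows T)
     in if rs = [] then Lambda else T\<lparr>rows := rs\<rparr>)"

definition keep_first :: "(bool list \<times> nat set) list \<Rightarrow> (bool list \<times> nat set) list" where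
  "keep_first xs = foldl (\<lambda>acc x. if fst x \<in> fst ` set acc then acc else acc @ [x]) [] xs"

definition opI :: "nat set \<Rightarrow> dtable \<Rightarrow> dtable" where
  "opI D T =
    (if At T \<subseteq> D then Lambda
     else \<lparr>cols = filter (\<lambda>c. c \<notin> D) (cols T),
           rows = keep_first
             (map (\<lambda>p. (map snd (filter (\<lambda>cv. fst cv \<notin> D) (zip (cols T) (fst p))), snd p))
                  (rows T))\<rparr>)"

definition opJ :: "(bool list \<Rightarrow> nat set) \<Rightarrow> dtable \<Rightarrow> dtable" where
  "opJ \<nu> T = T\<lparr>rows := map (\<lambda>p. (fst p, \<nu> (fst p))) (rows T)\<rparr>"

definition closure :: "dtable \<Rightarrow> dtable set" where
  "closure T = {opJ \<nu> (opI D T) | D \<nu>.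
      D \<subseteq> At T \<and>
      (\<forall>\<delta>. length \<delta> = card (At T - D) \<longrightarrow> finite (\<nu> \<delta>) \<and> \<nu> \<delta> \<noteq> {})}"

definition closure_set :: "dtable set \<Rightarrow> dtable set" where
  "closure_set A = (\<Union>T\<in>A. closure T)"

definition closed_class :: "dtable set \<Rightarrow> bool" where
  "closed_class A \<longleftrightarrow> A \<subseteq> M2 \<and> A \<noteq> {} \<and> closure_set A = A"

definition nontrivial :: "dtable set \<Rightarrow> bool" where
  "nontrivial A \<longleftrightarrow> (\<exists>T\<in>A. T \<noteq> Lambda)"

text \<open>A 2-decision tree is given by the nonempty list of the children of its (unlabelled) root.\<close>

datatype dnode = Leaf nat | Node nat "(bool \<times> dnode) list"

type_synonym dtree = "dnode list"

inductive wf_node :: "dnode \<Rightarrow> bool" where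
  "wf_node (Leaf d)"
| "cs \<noteq> [] \<Longrightarrow> (\<forall>p \<in> set cs. wf_node (snd p)) \<Longrightarrow> wf_node (Node f cs)"

inductive det_node :: "dnode \<Rightarrow> bool" where
  "det_node (Leaf d)"
| "distinct (map fst cs) \<Longrightarrow> (\<forall>p \<in> set cs. det_node (snd p)) \<Longrightarrow> det_node (Node f cs)"

inductive node_att :: "nat \<Rightarrow> dnode \<Rightarrow> bool" where
  "node_att f (Node f cs)"
| "p \<in> set cs \<Longrightarrow> node_att g (snd p) \<Longrightarrow> node_att g (Node f cs)"

inductive node_path :: "dnode \<Rightarrow> (nat \<times> bool) list \<Rightarrow> nat \<Rightarrow> bool" where
  "node_path (Leaf d) [] d"
| "(\<delta>, c) \<in> set cs \<Longrightarrow> node_path c \<alpha> d \<Longrightarrow> node_path (Node f cs) ((f, \<delta>) # \<alpha>) d"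

definition wf_tree :: "dtree \<Rightarrow> bool" where
  "wf_tree \<Gamma> \<longleftrightarrow> \<Gamma> \<noteq> [] \<and> (\<forall>v \<in> set \<Gamma>. wf_node v)"

definition tree_At :: "dtree \<Rightarrow> nat set" where
  "tree_At \<Gamma> = {f. \<exists>v \<in> set \<Gamma>. node_att f v}"

text \<open>Complete paths tau of Gamma, given by pi(tau) and the terminal decision.\<close>
definition tree_path :: "dtree \<Rightarrow> (nat \<times> bool) list \<Rightarrow> nat \<Rightarrow> bool" where
  "tree_path \<Gamma> \<alpha> d \<longleftrightarrow> (\<exists>v \<in> set \<Gamma>. node_path v \<alpha> d)"

definition is_ndt :: "dtree \<Rightarrow> dtable \<Rightarrow> bool" where
  "is_ndt \<Gamma> T \<longleftrightarrow>
     wf_tree \<Gamma> \<and> tree_At \<Gamma> \<subseteq> At T \<and>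
     (\<forall>r \<in> set (rows T). \<exists>\<alpha> d. tree_path \<Gamma> \<alpha> d \<and> r \<in> set (rows (subtab T \<alpha>))) \<and>
     (\<forall>\<alpha> d. tree_path \<Gamma> \<alpha> d \<longrightarrow> subtab T \<alpha> = Lambda \<or> d \<in> Pi_dec (subtab T \<alpha>))"

definition is_ddt :: "dtree \<Rightarrow> dtable \<Rightarrow> bool" where
  "is_ddt \<Gamma> T \<longleftrightarrow> is_ndt \<Gamma> T \<and> length \<Gamma> = 1 \<and> (\<forall>v \<in> set \<Gamma>. det_node v)"

definition partially_bounded_measure :: "(nat list \<Rightarrow> nat) \<Rightarrow> bool" where
  "partially_bounded_measure \<psi> \<longleftrightarrow>
     (\<forall>\<alpha>. \<psi> \<alpha> = 0 \<longleftrightarrow> \<alpha> = []) \<and>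
     (\<forall>\<alpha> \<beta>. mset \<alpha> = mset \<beta> \<longrightarrow> \<psi> \<alpha> = \<psi> \<beta>) \<and>
     (\<forall>\<alpha>1 \<alpha>2. \<psi> \<alpha>1 \<le> \<psi> (\<alpha>1 @ \<alpha>2)) \<and>
     (\<forall>\<alpha>1 \<alpha>2. \<psi> (\<alpha>1 @ \<alpha>2) \<le> \<psi> \<alpha>1 + \<psi> \<alpha>2)"

definition bounded_measure :: "(nat list \<Rightarrow> nat) \<Rightarrow> bool" where
  "bounded_measure \<psi> \<longleftrightarrow> partially_bounded_measure \<psi> \<and> (\<forall>\<alpha>. length \<alpha> \<le> \<psi> \<alpha>)"

definition psi_tree :: "(nat list \<Rightarrow> nat) \<Rightarrow> dtree \<Rightarrow> nat" where
  "psi_tree \<psi> \<Gamma> = Max {\<psi> (map fst \<alpha>) | \<alpha> d. tree_path \<Gamma> \<alpha> d}"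

definition psi_d :: "(nat list \<Rightarrow> nat) \<Rightarrow> dtable \<Rightarrow> nat" where
  "psi_d \<psi> T = (if T = Lambda then 0 else (LEAST k. \<exists>\<Gamma>. is_ddt \<Gamma> T \<and> psi_tree \<psi> \<Gamma> = k))"

definition psi_a :: "(nat list \<Rightarrow> nat) \<Rightarrow> dtable \<Rightarrow> nat" where
  "psi_a \<psi> T = (if T = Lambda then 0 else (LEAST k. \<exists>\<Gamma>. is_ndt \<Gamma> T \<and> psi_tree \<psi> \<Gamma> = k))"

definition m_psi :: "(nat list \<Rightarrow> nat) \<Rightarrow> dtable \<Rightarrow> nat" where
  "m_psi \<psi> T = (if At T = {} then 0 else Max ((\<lambda>f. \<psi> [f]) ` At T))"

definition complete_table :: "dtable \<Rightarrow> bool" where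
  "complete_table Q \<longleftrightarrow> Nrows Q = 2 ^ card (At Q)"

text \<open>Sup of an empty set of naturals is 0, matching "0 otherwise".\<close>
definition Zpar :: "dtable \<Rightarrow> nat" where
  "Zpar T = (if T = Lambda then 0
             else Sup {card (At Q) | Q. Q \<in> closure T \<and> complete_table Q})"

definition A_psi :: "(nat list \<Rightarrow> nat) \<Rightarrow> dtable set \<Rightarrow> nat \<Rightarrow> dtable set" where
  "A_psi \<psi> A n = {T \<in> A. m_psi \<psi> T \<le> n}"

text \<open>Partial functions Z_{psi,A} and H^infty_{psi,A}; None = undefined.\<close>
definition Z_fun :: "(nat list \<Rightarrow> nat) \<Rightarrow> dtable set \<Rightarrow> nat \<Rightarrow> nat option" where
  "Z_fun \<psi> A n = (let S = Zpar ` A_psi \<psi> A n in if finite S then Some (Max S) else None)"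

definition H_fun :: "(nat list \<Rightarrow> nat) \<Rightarrow> dtable set \<Rightarrow> nat \<Rightarrow> nat option" where
  "H_fun \<psi> A n = (let S = {psi_d \<psi> T | T. T \<in> A \<and> psi_a \<psi> T \<le> n}
                    in if finite S then Some (Max S) else None)"

end

theory Submission
  imports Defs
begin

inductive_simps np_leaf: "node_path (Leaf x) \<alpha> d"
inductive_simps np_node: "node_path (Node f cs) \<alpha> d"
inductive_simps na_leaf: "node_att g (Leaf x)"
inductive_simps na_node: "node_att g (Node f cs)"
inductive_simps dn_leaf: "det_node (Leaf x)"
inductive_simps dn_node: "det_node (Node f cs)"
inductive_simps wn_leaf: "wf_node (Leaf x)"
inductive_simps wn_node: "wf_node (Node f cs)"
lemma paths_finite: "finite {(\<alpha>,d). node_path v \<alpha> d}"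
proof (induction v)
  case (Leaf x)
  have "{(\<alpha>,d). node_path (Leaf x) \<alpha> d} = {([],x)}"
    by (auto simp: np_leaf np_node)
  then show ?case by simp
next
  case (Node f cs)
  have "{(\<alpha>,d). node_path (Node f cs) \<alpha> d} \<subseteq>
     (\<Union>p\<in>set cs. (\<lambda>(\<alpha>,d). ((f, fst p)#\<alpha>, d)) ` {(\<alpha>,d). node_path (snd p) \<alpha> d})"
    by (force simp: np_leaf np_node)
  moreover have "finite (\<Union>p\<in>set cs. (\<lambda>(\<alpha>,d). ((f, fst p)#\<alpha>, d)) ` {(\<alpha>,d). node_path (snd p) \<alpha> d})"
    using Node by (force intro: finite_UN_I)
  ultimately show ?case by (rule finite_subset)
qed

lemma decs_finite: "finite {d. \<exists>\<alpha>. node_path v \<alpha> d}"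
proof -
  have "{d. \<exists>\<alpha>. node_path v \<alpha> d} = snd ` {(\<alpha>,d). node_path v \<alpha> d}" by force
  then show ?thesis using paths_finite by simp
qed

lemma decs_card: "det_node v \<Longrightarrow> (\<forall>\<alpha> d. node_path v \<alpha> d \<longrightarrow> length \<alpha> \<le> h)
   \<Longrightarrow> card {d. \<exists>\<alpha>. node_path v \<alpha> d} \<le> 2^h"
proof (induction v arbitrary: h rule: det_node.induct)
  case (1 d)
  have "{d'. \<exists>\<alpha>. node_path (Leaf d) \<alpha> d'} = {d}" by (auto simp: np_leaf np_node)
  then show ?case by simp
next
  case (2 cs f)
  show ?case
  proof (cases h)
    case 0
    have "{d. \<exists>\<alpha>. node_path (Node f cs) \<alpha> d} = {}"
      using "2.prems" 0 by (force simp: np_leaf np_node)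
    then show ?thesis by simp
  next
    case (Suc h')
    have eq: "{d. \<exists>\<alpha>. node_path (Node f cs) \<alpha> d} = (\<Union>p\<in>set cs. {d. \<exists>\<alpha>. node_path (snd p) \<alpha> d})"
      by (force simp: np_leaf np_node)
    have b: "card {d. \<exists>\<alpha>. node_path (snd p) \<alpha> d} \<le> 2^h'" if "p \<in> set cs" for p
    proof -
      have "\<forall>\<alpha> d. node_path (snd p) \<alpha> d \<longrightarrow> length \<alpha> \<le> h'"
      proof (intro allI impI)
        fix \<alpha> d assume "node_path (snd p) \<alpha> d"
        then have "node_path (Node f cs) ((f, fst p) # \<alpha>) d"
          using that by (cases p) (auto intro: node_path.intros)
        then show "length \<alpha> \<le> h'" using "2.prems" Suc by fastforce
      qed
      then show ?thesis using "2.IH" that by blast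
    qed
    have c2: "card (set cs) \<le> 2"
    proof -
      have "distinct cs" using "2.hyps" by (simp add: distinct_map)
      then have "card (set cs) = card (set (map fst cs))"
        using "2.hyps" by (metis distinct_card length_map)
      also have "\<dots> \<le> card (UNIV :: bool set)" by (rule card_mono) auto
      finally show ?thesis by simp
    qed
    have "card {d. \<exists>\<alpha>. node_path (Node f cs) \<alpha> d} \<le> (\<Sum>p\<in>set cs. card {d. \<exists>\<alpha>. node_path (snd p) \<alpha> d})"
      unfolding eq by (rule card_UN_le) simp
    also have "\<dots> \<le> (\<Sum>p\<in>set cs. 2^h')" by (rule sum_mono) (rule b)
    also have "\<dots> = card (set cs) * 2^h'" by simp
    also have "\<dots> \<le> 2 * 2^h'" using c2 by simp
    finally show ?thesis using Suc by simp
  qed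
qed


fun mk :: "(nat \<times> bool) list \<Rightarrow> nat \<Rightarrow> dnode" where
  "mk [] d = Leaf d"
| "mk ((f,b)#L) d = Node f [(b, mk L d)]"

lemma mk_path: "node_path (mk L d) \<alpha> d' \<longleftrightarrow> \<alpha> = L \<and> d' = d"
proof (induction L arbitrary: \<alpha>)
  case Nil
  then show ?case by (simp add: np_leaf)
next
  case (Cons q L)
  obtain f b where q: "q = (f,b)" by (cases q)
  have "node_path (mk (q#L) d) \<alpha> d' \<longleftrightarrow> (\<exists>\<alpha>'. \<alpha> = (f,b)#\<alpha>' \<and> node_path (mk L d) \<alpha>' d')"
    unfolding q by (simp add: np_node)
  also have "\<dots> \<longleftrightarrow> \<alpha> = q#L \<and> d' = d" using Cons.IH q by auto
  finally show ?case .
qed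

lemma mk_att: "node_att f (mk L d) \<Longrightarrow> f \<in> fst ` set L"
  by (induction L) (auto simp: na_leaf na_node)

lemma mk_wf: "wf_node (mk L d)"
  by (induction L) (auto simp: wn_leaf wn_node)

fun ch :: "nat list \<Rightarrow> nat \<Rightarrow> dnode" where
  "ch [] k = Leaf k"
| "ch (c#xs) k = Node c [(False, Leaf k), (True, ch xs (Suc k))]"

definition dpath :: "nat list \<Rightarrow> nat \<Rightarrow> (nat \<times> bool) list" where
  "dpath xs j = map (\<lambda>c. (c,True)) (take j xs) @ (if j < length xs then [(xs!j, False)] else [])"

lemma ch_path: "node_path (ch xs k) \<alpha> d \<Longrightarrow> \<exists>j\<le>length xs. d = k + j \<and> \<alpha> = dpath xs j"
proof (induction xs arbitrary: k \<alpha> d)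
  case Nil
  then show ?case by (simp add: np_leaf dpath_def)
next
  case (Cons c xs)
  from Cons.prems obtain \<delta> v \<alpha>' where a: "\<alpha> = (c,\<delta>)#\<alpha>'" 
    "(\<delta>,v) \<in> set [(False, Leaf k), (True, ch xs (Suc k))]" "node_path v \<alpha>' d"
    by (auto simp: np_node)
  show ?case
  proof (cases \<delta>)
    case False
    then have "v = Leaf k" using a by auto
    then show ?thesis using a False by (intro exI[of _ 0]) (simp add: np_leaf dpath_def)
  next
    case True
    then have "v = ch xs (Suc k)" using a by auto
    then obtain j where "j \<le> length xs" "d = Suc k + j" "\<alpha>' = dpath xs j" using Cons.IH a by blast
    then show ?thesis using a True by (intro exI[of _ "Suc j"]) (simp add: dpath_def)
  qed
qed

lemma ch_path2: "j \<le> length xs \<Longrightarrow> node_path (ch xs k) (dpath xs j) (k + j)"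
proof (induction xs arbitrary: j k)
  case Nil
  then show ?case by (simp add: np_leaf dpath_def)
next
  case (Cons c xs)
  show ?case
  proof (cases j)
    case 0
    have "node_path (Leaf k) [] k" by (simp add: np_leaf)
    then show ?thesis using 0 by (auto simp: np_node dpath_def)
  next
    case (Suc j')
    then have "node_path (ch xs (Suc k)) (dpath xs j') (Suc k + j')" using Cons.IH[of j' "Suc k"] Cons.prems by simp
    moreover have "dpath (c#xs) j = (c,True) # dpath xs j'" using Suc by (simp add: dpath_def)
    ultimately show ?thesis using Suc by (auto simp: np_node)
  qed
qed

lemma ch_att: "node_att f (ch xs k) \<Longrightarrow> f \<in> set xs"
  by (induction xs arbitrary: k) (auto simp: na_leaf na_node)

lemma ch_wf: "wf_node (ch xs k)"
  by (induction xs arbitrary: k) (auto simp: wn_leaf wn_node)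

lemma ch_det: "det_node (ch xs k)"
  by (induction xs arbitrary: k) (auto simp: dn_leaf dn_node)


definition nu :: "bool list \<Rightarrow> nat set" where
  "nu \<delta> = {i. i \<le> length \<delta> \<and> (i = 0 \<or> \<delta>!(i-1)) \<and> (i = length \<delta> \<or> \<not> \<delta>!i)}"

lemma first_false: "\<exists>j\<le>length \<delta>. (\<forall>i<j. \<delta>!i) \<and> (j < length \<delta> \<longrightarrow> \<not> \<delta>!j)"
proof (cases "\<exists>j<length \<delta>. \<not> \<delta>!j")
  case True
  define j where "j = (LEAST j. j < length \<delta> \<and> \<not> \<delta>!j)"
  have j: "j < length \<delta> \<and> \<not> \<delta>!j" unfolding j_def using True by (metis (mono_tags, lifting) LeastI)
  have "\<forall>i<j. \<delta>!i"
  proof (intro allI impI)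
    fix i assume "i < j"
    then have "\<not> (i < length \<delta> \<and> \<not> \<delta>!i)" unfolding j_def by (rule not_less_Least)
    then show "\<delta>!i" using \<open>i < j\<close> j by auto
  qed
  then show ?thesis using j by (intro exI[of _ j]) auto
next
  case False
  then show ?thesis by (intro exI[of _ "length \<delta>"]) auto
qed

lemma nu_first: "j \<le> length \<delta> \<Longrightarrow> (\<forall>i<j. \<delta>!i) \<Longrightarrow> (j < length \<delta> \<longrightarrow> \<not> \<delta>!j) \<Longrightarrow> j \<in> nu \<delta>"
proof -
  assume a: "j \<le> length \<delta>" "\<forall>i<j. \<delta>!i" "j < length \<delta> \<longrightarrow> \<not> \<delta>!j"
  have "j = 0 \<or> \<delta>!(j-1)" using a(2) by (cases j) auto
  moreover have "j = length \<delta> \<or> \<not> \<delta>!j" using a(1,3) by linarith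
  ultimately show ?thesis using a(1) unfolding nu_def by blast
qed

lemma nu_ne: "nu \<delta> \<noteq> {}"
  using first_false[of \<delta>] nu_first by blast

lemma nu_fin: "finite (nu \<delta>)"
  unfolding nu_def by (rule finite_subset[of _ "{..length \<delta>}"]) auto

definition tv :: "nat \<Rightarrow> nat \<Rightarrow> bool list" where
  "tv i m = map (\<lambda>j. j < i) [0..<m]"

lemma tv_len[simp]: "length (tv i m) = m" by (simp add: tv_def)
lemma tv_nth: "j < m \<Longrightarrow> tv i m ! j = (j < i)" by (simp add: tv_def)

lemma nu_tv: "i \<le> m \<Longrightarrow> nu (tv i m) = {i}"
proof
  assume im: "i \<le> m"
  show "nu (tv i m) \<subseteq> {i}"
  proof
    fix x assume "x \<in> nu (tv i m)"
    then have x: "x \<le> m" "x = 0 \<or> tv i m ! (x-1)" "x = m \<or> \<not> tv i m ! x" unfolding nu_def by auto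
    have "\<not> x < i"
    proof
      assume "x < i" then have "x < m" using im by simp
      then show False using x(3) tv_nth \<open>x < i\<close> by auto
    qed
    moreover have "\<not> i < x"
    proof
      assume "i < x" then have "x - 1 < m" "x \<noteq> 0" using x(1) by auto
      then show False using x(2) tv_nth[of "x-1" m i] \<open>i < x\<close> by auto
    qed
    ultimately show "x \<in> {i}" by simp
  qed
  show "{i} \<subseteq> nu (tv i m)"
    using im by (auto intro!: nu_first simp: tv_nth)
qed

definition sat :: "dtable \<Rightarrow> (nat \<times> bool) list \<Rightarrow> (bool list \<times> nat set) \<Rightarrow> bool" where
  "sat T \<alpha> r \<longleftrightarrow> (\<forall>q\<in>set \<alpha>. row_val (cols T) (fst r) (fst q) = Some (snd q))"

lemma sub_in: "r \<in> set (rows T) \<Longrightarrow> sat T \<alpha> r \<Longrightarrow> r \<in> set (rows (subtab T \<alpha>))"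
  unfolding subtab_def sat_def Let_def by (auto simp: filter_empty_conv)

lemma sub_in2: "r \<in> set (rows (subtab T \<alpha>)) \<Longrightarrow> r \<in> set (rows T) \<and> sat T \<alpha> r"
  unfolding subtab_def sat_def Let_def by (auto simp: Lambda_def split: if_splits)

lemma sub_ok: "(\<forall>r\<in>set (rows T). sat T \<alpha> r \<longrightarrow> d \<in> snd r) \<Longrightarrow> subtab T \<alpha> = Lambda \<or> d \<in> Pi_dec (subtab T \<alpha>)"
  unfolding Pi_dec_def using sub_in2 by blast

lemma sub_ne: "r \<in> set (rows (subtab T \<alpha>)) \<Longrightarrow> subtab T \<alpha> \<noteq> Lambda"
  by (auto simp: Lambda_def)

lemma Pi_sub: "r \<in> set (rows X) \<Longrightarrow> Pi_dec X \<subseteq> snd r"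
  unfolding Pi_dec_def by blast

lemma rv: "distinct cs \<Longrightarrow> length v = length cs \<Longrightarrow> i < length cs \<Longrightarrow> row_val cs v (cs!i) = Some b \<longleftrightarrow> v!i = b"
  unfolding row_val_def by (simp add: map_of_zip_nth)


lemma set_take_nth: "j \<le> length xs \<Longrightarrow> set (take j xs) = {xs!i | i. i < j}"
proof
  assume j: "j \<le> length xs"
  show "set (take j xs) \<subseteq> {xs!i | i. i < j}"
  proof
    fix x assume "x \<in> set (take j xs)"
    then obtain i where "i < length (take j xs)" "x = take j xs ! i" by (auto simp: in_set_conv_nth)
    then show "x \<in> {xs!i | i. i < j}" using j by auto
  qed
  show "{xs!i | i. i < j} \<subseteq> set (take j xs)"
  proof
    fix x assume "x \<in> {xs!i | i. i < j}"
    then obtain i where "i < j" "x = xs!i" by blast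
    then show "x \<in> set (take j xs)" using j in_set_conv_nth[of x "take j xs"] by (metis length_take min.absorb2 nth_take)
  qed
qed

definition Lp :: "nat list \<Rightarrow> nat \<Rightarrow> (nat \<times> bool) list" where
  "Lp cs i = (if 0 < i then [(cs!(i-1),True)] else []) @ (if i < length cs then [(cs!i,False)] else [])"

lemma psi_tree_ge:
  assumes "tree_path \<Gamma> \<alpha> d" "finite {(\<alpha>,d). tree_path \<Gamma> \<alpha> d}"
  shows "\<psi> (map fst \<alpha>) \<le> psi_tree \<psi> \<Gamma>"
proof -
  have "{\<psi> (map fst \<alpha>) | \<alpha> d. tree_path \<Gamma> \<alpha> d} = (\<lambda>(\<alpha>,d). \<psi> (map fst \<alpha>)) ` {(\<alpha>,d). tree_path \<Gamma> \<alpha> d}"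
    by auto
  then have "finite {\<psi> (map fst \<alpha>) | \<alpha> d. tree_path \<Gamma> \<alpha> d}" using assms(2) by simp
  then show ?thesis unfolding psi_tree_def using assms(1) by (intro Max_ge) auto
qed

lemma tree_paths_finite: "finite {(\<alpha>,d). tree_path \<Gamma> \<alpha> d}"
proof -
  have "{(\<alpha>,d). tree_path \<Gamma> \<alpha> d} = (\<Union>v\<in>set \<Gamma>. {(\<alpha>,d). node_path v \<alpha> d})"
    unfolding tree_path_def by auto
  then show ?thesis using paths_finite by simp
qed

lemma core:
  assumes wf: "wf_table T" and m: "length (cols T) = m" and m1: "1 \<le> m"
  and rall: "\<And>\<delta>. length \<delta> = m \<Longrightarrow> (\<delta>, nu \<delta>) \<in> set (rows T)"
  and rnu: "\<And>p. p \<in> set (rows T) \<Longrightarrow> snd p = nu (fst p)"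
  and psi: "bounded_measure \<psi>" and pc: "\<forall>c\<in>set (cols T). \<psi> [c] \<le> n"
  shows "psi_a \<psi> T \<le> 2*n \<and> m < 2 ^ psi_d \<psi> T"
proof -
  define cs where "cs = cols T"
  have dcs: "distinct cs" using wf unfolding wf_table_def cs_def by simp
  have rlen: "\<And>r. r \<in> set (rows T) \<Longrightarrow> length (fst r) = length cs"
    using wf unfolding wf_table_def cs_def by simp
  have mcs: "length cs = m" using m cs_def by simp
  have satlit: "\<And>r i b. r \<in> set (rows T) \<Longrightarrow> i < m \<Longrightarrow> row_val cs (fst r) (cs!i) = Some b \<longleftrightarrow> fst r ! i = b"
    using rv dcs rlen mcs by metis
  have TnL: "T \<noteq> Lambda"
    using rall[of "replicate m False"] by (auto simp: Lambda_def)
  have At: "At T = set cs" unfolding At_def cs_def by simp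
  have pm: "partially_bounded_measure \<psi>" "\<forall>\<alpha>. length \<alpha> \<le> \<psi> \<alpha>" using psi unfolding bounded_measure_def by auto
  have psi0: "\<psi> [] = 0" using pm(1) unfolding partially_bounded_measure_def by blast
  have psiadd: "\<And>a b. \<psi> (a @ b) \<le> \<psi> a + \<psi> b" using pm(1) unfolding partially_bounded_measure_def by blast
  define Gn where "Gn = map (\<lambda>i. mk (Lp cs i) i) [0..<Suc m]"
  have tpn: "tree_path Gn \<alpha> d \<longleftrightarrow> (\<exists>i\<le>m. \<alpha> = Lp cs i \<and> d = i)" for \<alpha> d
    unfolding tree_path_def Gn_def by (auto simp: mk_path)
  have Lp_sat: "sat T (Lp cs i) r \<longleftrightarrow> (0 < i \<longrightarrow> fst r ! (i-1)) \<and> (i < m \<longrightarrow> \<not> fst r ! i)"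
    if "r \<in> set (rows T)" "i \<le> m" for r i
  proof -
    have a: "0 < i \<Longrightarrow> row_val cs (fst r) (cs!(i-1)) = Some True \<longleftrightarrow> fst r ! (i-1)"
      using satlit[OF that(1), of "i-1" True] that(2) by auto
    have b: "i < m \<Longrightarrow> row_val cs (fst r) (cs!i) = Some False \<longleftrightarrow> \<not> fst r ! i"
      using satlit[OF that(1), of i False] by auto
    show ?thesis unfolding sat_def Lp_def using a b mcs by (auto simp flip: cs_def)
  qed
  have ndt: "is_ndt Gn T"
    unfolding is_ndt_def
  proof (intro conjI allI impI ballI)
    show "wf_tree Gn" unfolding wf_tree_def Gn_def by (auto simp: mk_wf)
    show "tree_At Gn \<subseteq> At T"
    proof
      fix f assume "f \<in> tree_At Gn"
      then obtain i where i: "i \<le> m" "node_att f (mk (Lp cs i) i)" unfolding tree_At_def Gn_def by auto (metis less_imp_le)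
      have "f \<in> fst ` set (Lp cs i)" by (rule mk_att[OF i(2)])
      then show "f \<in> At T" unfolding At Lp_def using i(1) mcs by (auto split: if_splits)
    qed
  next
    fix r assume r: "r \<in> set (rows T)"
    obtain i where i: "i \<in> nu (fst r)" using nu_ne by blast
    then have im: "i \<le> m" using rlen[OF r] mcs unfolding nu_def by auto
    have "sat T (Lp cs i) r" using Lp_sat[OF r im] i rlen[OF r] mcs unfolding nu_def by auto
    then show "\<exists>\<alpha> d. tree_path Gn \<alpha> d \<and> r \<in> set (rows (subtab T \<alpha>))"
      using sub_in[OF r] tpn im by blast
  next
    fix \<alpha> d assume "tree_path Gn \<alpha> d"
    then obtain i where i: "i \<le> m" "\<alpha> = Lp cs i" "d = i" using tpn by blast
    show "subtab T \<alpha> = Lambda \<or> d \<in> Pi_dec (subtab T \<alpha>)"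
    proof (rule sub_ok, intro ballI impI)
      fix r assume r: "r \<in> set (rows T)" "sat T \<alpha> r"
      then have "(0 < i \<longrightarrow> fst r ! (i-1)) \<and> (i < m \<longrightarrow> \<not> fst r ! i)" using Lp_sat i by blast
      then have "i \<in> nu (fst r)" unfolding nu_def using i(1) rlen[OF r(1)] mcs by auto
      then show "d \<in> snd r" using rnu[OF r(1)] i by simp
    qed
  qed
  have Lpb: "\<psi> (map fst (Lp cs i)) \<le> 2*n" if "i \<le> m" for i
  proof -
    define A where "A = (if 0 < i then [cs!(i-1)] else [])"
    define B where "B = (if i < m then [cs!i] else [])"
    have e: "map fst (Lp cs i) = A @ B" unfolding Lp_def A_def B_def using mcs by simp
    have "\<psi> A \<le> n" unfolding A_def using pc that mcs psi0 by (auto simp flip: cs_def)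
    moreover have "\<psi> B \<le> n" unfolding B_def using pc that mcs psi0 by (auto simp flip: cs_def)
    ultimately show ?thesis using psiadd[of A B] e by simp
  qed
  have "psi_tree \<psi> Gn \<le> 2*n"
  proof -
    have S: "{\<psi> (map fst \<alpha>) | \<alpha> d. tree_path Gn \<alpha> d} = (\<lambda>i. \<psi> (map fst (Lp cs i))) ` {..m}"
      using tpn by auto
    show ?thesis unfolding psi_tree_def S using Lpb by (subst Max_le_iff) auto
  qed
  then have pa: "psi_a \<psi> T \<le> 2*n"
    unfolding psi_a_def using TnL ndt by (auto intro: Least_le[THEN order_trans])
  define Gd where "Gd = [ch cs 0]"
  have dp_sat: "sat T (dpath cs j) r \<longleftrightarrow> (\<forall>i<j. fst r ! i) \<and> (j < m \<longrightarrow> \<not> fst r ! j)"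
    if "r \<in> set (rows T)" "j \<le> m" for r j
  proof -
    have "set (dpath cs j) = {(cs!i, True) | i. i < j} \<union> (if j < m then {(cs!j,False)} else {})"
      unfolding dpath_def using that(2) mcs set_take_nth[of j cs]
      by (auto split: if_splits)
    note S = this
    show ?thesis
    proof
      assume "sat T (dpath cs j) r"
      then have q: "\<And>q. q \<in> set (dpath cs j) \<Longrightarrow> row_val cs (fst r) (fst q) = Some (snd q)"
        unfolding sat_def cs_def by blast
      have "fst r ! i" if "i < j" for i
        using q[of "(cs!i,True)"] S satlit[OF \<open>r \<in> set (rows T)\<close>, of i True] that \<open>j \<le> m\<close> by auto
      moreover have "\<not> fst r ! j" if "j < m"
        using q[of "(cs!j,False)"] S satlit[OF \<open>r \<in> set (rows T)\<close>, of j False] that by auto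
      ultimately show "(\<forall>i<j. fst r ! i) \<and> (j < m \<longrightarrow> \<not> fst r ! j)" by blast
    next
      assume a: "(\<forall>i<j. fst r ! i) \<and> (j < m \<longrightarrow> \<not> fst r ! j)"
      show "sat T (dpath cs j) r" unfolding sat_def
      proof
        fix q assume "q \<in> set (dpath cs j)"
        then consider i where "i < j" "q = (cs!i, True)" | "j < m" "q = (cs!j, False)"
          using S by (auto split: if_splits)
        then show "row_val (cols T) (fst r) (fst q) = Some (snd q)"
        proof cases
          case 1 then show ?thesis using a satlit[OF \<open>r \<in> set (rows T)\<close>, of i True] \<open>j \<le> m\<close> by (auto simp flip: cs_def)
        next
          case 2 then show ?thesis using a satlit[OF \<open>r \<in> set (rows T)\<close>, of j False] by (auto simp flip: cs_def)
        qed
      qed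
    qed
  qed
  have ddt: "is_ddt Gd T"
    unfolding is_ddt_def is_ndt_def
  proof (intro conjI allI impI ballI)
    show "wf_tree Gd" unfolding wf_tree_def Gd_def by (auto simp: ch_wf)
    show "tree_At Gd \<subseteq> At T" unfolding tree_At_def Gd_def At using ch_att by auto
    show "length Gd = 1" unfolding Gd_def by simp
  next
    fix v assume "v \<in> set Gd" then show "det_node v" unfolding Gd_def by (simp add: ch_det)
  next
    fix r assume r: "r \<in> set (rows T)"
    obtain j where j: "j \<le> length (fst r)" "\<forall>i<j. fst r ! i" "j < length (fst r) \<longrightarrow> \<not> fst r ! j"
      using first_false by blast
    have jm: "j \<le> m" using j rlen[OF r] mcs by simp
    have "sat T (dpath cs j) r" using dp_sat[OF r jm] j rlen[OF r] mcs by auto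
    moreover have "tree_path Gd (dpath cs j) j" unfolding tree_path_def Gd_def
      using ch_path2[of j cs 0] jm mcs by simp
    ultimately show "\<exists>\<alpha> d. tree_path Gd \<alpha> d \<and> r \<in> set (rows (subtab T \<alpha>))"
      using sub_in[OF r] by blast
  next
    fix \<alpha> d assume "tree_path Gd \<alpha> d"
    then obtain j where j: "j \<le> m" "\<alpha> = dpath cs j" "d = j" unfolding tree_path_def Gd_def
      using ch_path[of cs 0] mcs by fastforce
    show "subtab T \<alpha> = Lambda \<or> d \<in> Pi_dec (subtab T \<alpha>)"
    proof (rule sub_ok, intro ballI impI)
      fix r assume r: "r \<in> set (rows T)" "sat T \<alpha> r"
      then have "(\<forall>i<j. fst r ! i) \<and> (j < m \<longrightarrow> \<not> fst r ! j)" using dp_sat j by blast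
      then have "j \<in> nu (fst r)" using nu_first j(1) rlen[OF r(1)] mcs by auto
      then show "d \<in> snd r" using rnu[OF r(1)] j by simp
    qed
  qed
  have lb: "m < 2 ^ psi_tree \<psi> \<Gamma>" if G: "is_ddt \<Gamma> T" for \<Gamma>
  proof -
    obtain v where v: "\<Gamma> = [v]" using G unfolding is_ddt_def by (metis One_nat_def length_0_conv length_Suc_conv)
    have dv: "det_node v" using G v unfolding is_ddt_def by simp
    have len: "\<forall>\<alpha> d. node_path v \<alpha> d \<longrightarrow> length \<alpha> \<le> psi_tree \<psi> \<Gamma>"
    proof (intro allI impI)
      fix \<alpha> d assume "node_path v \<alpha> d"
      then have "tree_path \<Gamma> \<alpha> d" unfolding tree_path_def v by simp
      then have "\<psi> (map fst \<alpha>) \<le> psi_tree \<psi> \<Gamma>" using psi_tree_ge tree_paths_finite by blast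
      moreover have "length \<alpha> \<le> \<psi> (map fst \<alpha>)" using pm(2) by (metis length_map)
      ultimately show "length \<alpha> \<le> psi_tree \<psi> \<Gamma>" by simp
    qed
    have sub: "{..m} \<subseteq> {d. \<exists>\<alpha>. node_path v \<alpha> d}"
    proof
      fix i assume "i \<in> {..m}"
      then have im: "i \<le> m" by simp
      have r: "(tv i m, nu (tv i m)) \<in> set (rows T)" using rall by simp
      then obtain \<alpha> d where ad: "tree_path \<Gamma> \<alpha> d" "(tv i m, nu (tv i m)) \<in> set (rows (subtab T \<alpha>))"
        using G unfolding is_ddt_def is_ndt_def by blast
      have "subtab T \<alpha> \<noteq> Lambda" using sub_ne[OF ad(2)] .
      then have "d \<in> Pi_dec (subtab T \<alpha>)" using G ad(1) unfolding is_ddt_def is_ndt_def by blast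
      then have "d \<in> nu (tv i m)" using Pi_sub[OF ad(2)] by auto
      then have "d = i" using nu_tv[OF im] by simp
      then show "i \<in> {d. \<exists>\<alpha>. node_path v \<alpha> d}" using ad(1) unfolding tree_path_def v by auto
    qed
    have "Suc m = card {..m}" by simp
    also have "\<dots> \<le> card {d. \<exists>\<alpha>. node_path v \<alpha> d}" by (rule card_mono[OF decs_finite sub])
    also have "\<dots> \<le> 2 ^ psi_tree \<psi> \<Gamma>" by (rule decs_card[OF dv len])
    finally show ?thesis by simp
  qed
  have ex: "\<exists>k. \<exists>\<Gamma>. is_ddt \<Gamma> T \<and> psi_tree \<psi> \<Gamma> = k" using ddt by blast
  obtain \<Gamma> where G: "is_ddt \<Gamma> T" "psi_tree \<psi> \<Gamma> = (LEAST k. \<exists>\<Gamma>. is_ddt \<Gamma> T \<and> psi_tree \<psi> \<Gamma> = k)"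
    using LeastI_ex[OF ex] by blast
  have "psi_d \<psi> T = psi_tree \<psi> \<Gamma>" unfolding psi_d_def using TnL G(2) by simp
  then have "m < 2 ^ psi_d \<psi> T" using lb[OF G(1)] by simp
  then show ?thesis using pa by simp
qed


lemma opI_At: "At (opI D T) \<subseteq> At T"
  unfolding opI_def At_def Lambda_def by auto

lemma big:
  assumes cc: "closed_class A" and psi: "bounded_measure \<psi>" and Z: "Z_fun \<psi> A n = None"
  shows "\<exists>T'\<in>A. psi_a \<psi> T' \<le> 2*n \<and> K < psi_d \<psi> T'"
proof -
  define K' :: nat where "K' = 2^K"
  have K'1: "1 \<le> K'" unfolding K'_def by simp
  have inf: "infinite (Zpar ` A_psi \<psi> A n)" using Z unfolding Z_fun_def Let_def by (auto split: if_splits)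
  then obtain z where z: "z \<in> Zpar ` A_psi \<psi> A n" "\<not> z \<le> K'"
    using finite_nat_set_iff_bounded_le by blast
  then obtain T where T: "T \<in> A" "m_psi \<psi> T \<le> n" "K' < Zpar T" unfolding A_psi_def by auto
  have TnL: "T \<noteq> Lambda" using T(3) unfolding Zpar_def by (auto split: if_splits)
  define S2 where "S2 = {card (At Q) | Q. Q \<in> closure T \<and> complete_table Q}"
  have ZS: "Zpar T = Sup S2" unfolding Zpar_def S2_def using TnL by simp
  have "\<exists>x\<in>S2. K' \<le> x"
  proof (rule ccontr)
    assume "\<not> (\<exists>x\<in>S2. K' \<le> x)"
    then have lt: "\<forall>x\<in>S2. x < K'" by auto
    then have "finite S2" by (meson finite_nat_set_iff_bounded_le less_imp_le_nat)
    then have "Sup S2 < K'" using lt K'1 unfolding Sup_nat_def by auto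
    then show False using T(3) ZS by simp
  qed
  then obtain Q where Q: "Q \<in> closure T" "complete_table Q" "K' \<le> card (At Q)" unfolding S2_def by auto
  then obtain D \<nu>0 where Dn: "Q = opJ \<nu>0 (opI D T)" "D \<subseteq> At T" unfolding closure_def by auto
  define X where "X = opI D T"
  define T' where "T' = opJ nu X"
  have T'cl: "T' \<in> closure T" unfolding closure_def T'_def X_def using Dn(2) nu_ne nu_fin by blast
  have T'A: "T' \<in> A" using cc T(1) T'cl unfolding closed_class_def closure_set_def by blast
  have wf: "wf_table T'" using cc T'A unfolding closed_class_def M2_def by blast
  define m where "m = length (cols T')"
  have colsT': "cols T' = cols X" "cols Q = cols X" unfolding T'_def opJ_def Dn(1) X_def by simp_all
  have rowsT': "rows T' = map (\<lambda>p. (fst p, nu (fst p))) (rows X)" unfolding T'_def opJ_def by simp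
  have dc: "distinct (cols T')" using wf unfolding wf_table_def by simp
  have cardAt: "card (At Q) = m" unfolding At_def m_def using colsT' dc by (simp add: distinct_card)
  have nr: "length (rows T') = 2 ^ m"
    using Q(2) cardAt rowsT' unfolding complete_table_def Nrows_def Dn(1) opJ_def X_def by simp
  have rnu: "\<And>p. p \<in> set (rows T') \<Longrightarrow> snd p = nu (fst p)" using rowsT' by auto
  have rall: "(\<delta>, nu \<delta>) \<in> set (rows T')" if "length \<delta> = m" for \<delta>
  proof -
    define V where "V = set (map fst (rows T'))"
    define W where "W = {xs. set xs \<subseteq> (UNIV::bool set) \<and> length xs = m}"
    have cV: "card V = 2^m" using wf nr unfolding V_def wf_table_def by (metis distinct_card length_map)
    have cW: "card W = 2^m" unfolding W_def using card_lists_length_eq[of "UNIV::bool set" m] by simp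
    have fW: "finite W" unfolding W_def using finite_lists_length_eq[of "UNIV::bool set" m] by simp
    have VW: "V \<subseteq> W" using wf unfolding V_def W_def wf_table_def m_def by auto
    have "V = W" using card_subset_eq[OF fW VW] cV cW by simp
    then have "\<delta> \<in> V" using that unfolding W_def by simp
    then obtain p where "p \<in> set (rows T')" "fst p = \<delta>" unfolding V_def by auto
    then show ?thesis using rnu by (metis prod.collapse)
  qed
  have pc: "\<forall>c\<in>set (cols T'). \<psi> [c] \<le> n"
  proof
    fix c assume "c \<in> set (cols T')"
    then have "c \<in> At T" using opI_At[of D T] colsT' unfolding At_def X_def by auto
    then have "\<psi> [c] \<le> Max ((\<lambda>f. \<psi> [f]) ` At T)" by (intro Max_ge) (auto simp: At_def)
    also have "\<dots> = m_psi \<psi> T" unfolding m_psi_def using \<open>c \<in> At T\<close> by auto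
    finally show "\<psi> [c] \<le> n" using T(2) by simp
  qed
  have m1: "1 \<le> m" using K'1 Q(3) cardAt by simp
  have c: "psi_a \<psi> T' \<le> 2*n \<and> m < 2 ^ psi_d \<psi> T'"
    by (rule core[OF wf m_def[symmetric] m1 rall rnu psi pc])
  then have "(2::nat)^K < 2 ^ psi_d \<psi> T'" using Q(3) cardAt unfolding K'_def by linarith
  then have "K < psi_d \<psi> T'" using power_less_imp_less_exp by fastforce
  then show ?thesis using c T'A by blast
qed

theorem lemma11:
  fixes A :: "dtable set" and \<psi> :: "nat list \<Rightarrow> nat"
  assumes "closed_class A"
    and "nontrivial A"
    and "bounded_measure \<psi>"
    and "\<exists>n. Z_fun \<psi> A n = None"
  shows "\<exists>n. H_fun \<psi> A n = None"
proof -
  obtain n where n: "Z_fun \<psi> A n = None" using assms(4) by blast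
  define S where "S = {psi_d \<psi> T | T. T \<in> A \<and> psi_a \<psi> T \<le> 2*n}"
  have "infinite S"
  proof
    assume "finite S"
    then obtain k where k: "\<forall>x\<in>S. x \<le> k" using finite_nat_set_iff_bounded_le by blast
    obtain T' where "T' \<in> A" "psi_a \<psi> T' \<le> 2*n" "k < psi_d \<psi> T'" using big[OF assms(1) assms(3) n] by blast
    then show False using k unfolding S_def by force
  qed
  then have "H_fun \<psi> A (2*n) = None" unfolding H_fun_def S_def Let_def by simp
  then show ?thesis by blast
qed

end
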